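(* Every deterministic mechanism for locating one facility on $[0,1]$ that is anonymous, Pareto efficient and strategy proof has approximation ratio at least $\frac{6}{5}$ for the complemented Gini index of utilities.
   Context: Agents $1,\dots,n$ report locations $x_1,\dots,x_n\in[0,1]$; a deterministic mechanism $f$ maps each profile (for each $n$) to a facility location $y=f(x_1,\dots,x_n)\in[0,1]$. Agent $i$'s distance is $d_i=|x_i-y|$, utility $u_i=1-d_i$. The Gini index of utilities is $G_u=\frac{\sum_i\sum_j|u_i-u_j|}{2n\sum_i u_i}$ and the complemented Gini index is $1-G_u$. $f$ is anonymous if permuting the reports does not change the output; Pareto efficient if for no profile is there a location $z$ with $|x_j-z|\le|x_j-f(x)|$ for all $j$ and strict inequality for some $i$; strategy proof if no agent $i$ can report some $x_i'$ and obtain $|x_i-f(x_1,\dots,x_i',\dots,x_n)|<|x_i-f(x)|$. The approximation ratio of $f$ is the supremum over all profiles $x$ of $\mathrm{OPT}(x)/(1-G_u(f(x)))$, where $\mathrm{OPT}(x)$ is the maximum of $1-G_u$ over all facility locations in $[0,1]$. *)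

theory Defs
  imports "HOL-Analysis.Analysis"
begin

definition profile :: "real list \<Rightarrow> bool" where
  "profile xs \<longleftrightarrow> xs \<noteq> [] \<and> (\<forall>x\<in>set xs. x \<in> {0..1})"

definition utilities :: "real list \<Rightarrow> real \<Rightarrow> real list" where
  "utilities xs y = map (\<lambda>x. 1 - \<bar>x - y\<bar>) xs"

definition gini :: "real list \<Rightarrow> real" where
  "gini us = (\<Sum>i<length us. \<Sum>j<length us. \<bar>us!i - us!j\<bar>)
              / (2 * real (length us) * sum_list us)"

definition comp_gini :: "real list \<Rightarrow> real \<Rightarrow> real" where
  "comp_gini xs y = 1 - gini (utilities xs y)"

definition OPT :: "real list \<Rightarrow> real" where
  "OPT xs = (SUP y\<in>{0..1}. comp_gini xs y)"

definition mechanism :: "(real list \<Rightarrow> real) \<Rightarrow> bool" where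
  "mechanism f \<longleftrightarrow> (\<forall>xs. profile xs \<longrightarrow> f xs \<in> {0..1})"

definition anonymous :: "(real list \<Rightarrow> real) \<Rightarrow> bool" where
  "anonymous f \<longleftrightarrow> (\<forall>xs ys. profile xs \<longrightarrow> mset ys = mset xs \<longrightarrow> f ys = f xs)"

definition pareto_efficient :: "(real list \<Rightarrow> real) \<Rightarrow> bool" where
  "pareto_efficient f \<longleftrightarrow> (\<forall>xs. profile xs \<longrightarrow>
     \<not> (\<exists>z\<in>{0..1}. (\<forall>j<length xs. \<bar>xs!j - z\<bar> \<le> \<bar>xs!j - f xs\<bar>)
                     \<and> (\<exists>i<length xs. \<bar>xs!i - z\<bar> < \<bar>xs!i - f xs\<bar>)))"

definition strategy_proof :: "(real list \<Rightarrow> real) \<Rightarrow> bool" where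
  "strategy_proof f \<longleftrightarrow> (\<forall>xs i x'. profile xs \<longrightarrow> i < length xs \<longrightarrow> x' \<in> {0..1} \<longrightarrow>
     \<not> (\<bar>xs!i - f (xs[i := x'])\<bar> < \<bar>xs!i - f xs\<bar>))"

definition approx_ratio :: "(real list \<Rightarrow> real) \<Rightarrow> ereal" where
  "approx_ratio f = (SUP xs\<in>{xs. profile xs}. ereal (OPT xs / comp_gini xs (f xs)))"

end

theory Submission
  imports Defs
begin

lemma gini2: "gini [a, b] = 2 * \<bar>a - b\<bar> / (4 * (a + b))"
  unfolding gini_def by (simp add: numeral_2_eq_2 lessThan_Suc abs_minus_commute)

lemma cg2: "comp_gini [a, b] y = 1 - 2 * \<bar>(1 - \<bar>a - y\<bar>) - (1 - \<bar>b - y\<bar>)\<bar> / (4 * ((1 - \<bar>a - y\<bar>) + (1 - \<bar>b - y\<bar>)))"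
  unfolding comp_gini_def utilities_def by (simp add: gini2)

lemma opt_ge:
  assumes "a \<in> {0..1}" "b \<in> {0..1}" "y \<in> {0..1}"
  shows "comp_gini [a, b] y \<le> OPT [a, b]"
  unfolding OPT_def
proof (rule cSUP_upper[OF assms(3)])
  show "bdd_above (comp_gini [a, b] ` {0..1})"
  proof (rule bdd_aboveI2)
    fix z :: real assume "z \<in> {0..1}"
    with assms have "0 \<le> 2 * \<bar>(1 - \<bar>a - z\<bar>) - (1 - \<bar>b - z\<bar>)\<bar> / (4 * ((1 - \<bar>a - z\<bar>) + (1 - \<bar>b - z\<bar>)))"
      by (intro divide_nonneg_nonneg) (auto simp: abs_if)
    then show "comp_gini [a, b] z \<le> 1" by (simp add: cg2)
  qed
qed

lemma ratio_le:
  assumes "profile xs" "ereal r \<le> ereal (OPT xs / comp_gini xs (f xs))"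
  shows "ereal r \<le> approx_ratio f"
  unfolding approx_ratio_def
  using assms by (meson SUP_upper mem_Collect_eq order_trans)

theorem theorem5:
  fixes f :: "real list \<Rightarrow> real"
  assumes "mechanism f" and "anonymous f" and "pareto_efficient f" and "strategy_proof f"
  shows "approx_ratio f \<ge> ereal (6/5)"
proof -
  define p where "p = f [0, 1]"
  have pr01: "profile [0, 1]" by (simp add: profile_def)
  have p01: "p \<in> {0..1}" using assms(1) pr01 unfolding mechanism_def p_def by blast
  show ?thesis
  proof (cases "p \<le> 1/2")
    case True
    have pr: "profile [p, 1]" using p01 by (simp add: profile_def)
    have "\<not> (\<bar>[p,1]!0 - f ([p,1][0 := 0])\<bar> < \<bar>[p,1]!0 - f [p,1]\<bar>)"
      using assms(4) pr unfolding strategy_proof_def by (metis atLeastAtMost_iff length_Cons list.size(3) zero_le_one zero_less_Suc order_refl)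
    hence fp: "f [p, 1] = p" by (simp add: p_def)
    have c: "comp_gini [p, 1] p = (1 + 3*p) / (2 * (1 + p))"
      using p01 by (simp add: cg2 field_simps)
    have o: "1 \<le> OPT [p, 1]"
    proof -
      have "\<bar>p - (1+p)/2\<bar> = (1-p)/2" "\<bar>1 - (1+p)/2\<bar> = (1-p)/2" using p01 by (auto simp: abs_if field_simps)
      hence "comp_gini [p, 1] ((1+p)/2) = 1" by (simp only: cg2) simp
      moreover have "(1+p)/2 \<in> {0..1}" using p01 by auto
      ultimately show ?thesis using opt_ge[of p 1 "(1+p)/2"] p01 by auto
    qed
    have "6/5 \<le> OPT [p,1] / comp_gini [p,1] (f [p,1])"
      unfolding fp c using o p01 True mult_left_mono[OF o, of p] by (simp add: field_simps)
    then show ?thesis using ratio_le[OF pr] by simp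
  next
    case False
    have pr: "profile [0, p]" using p01 by (simp add: profile_def)
    have "\<not> (\<bar>[0,p]!1 - f ([0,p][1 := 1])\<bar> < \<bar>[0,p]!1 - f [0,p]\<bar>)"
      using assms(4) pr unfolding strategy_proof_def by (metis atLeastAtMost_iff length_Cons list.size(3) zero_le_one One_nat_def lessI numeral_2_eq_2 order_refl)
    hence fp: "f [0, p] = p" by (simp add: p_def)
    have c: "comp_gini [0, p] p = (4 - 3*p) / (2 * (2 - p))"
      using p01 by (simp add: cg2 field_simps)
    have o: "1 \<le> OPT [0, p]"
    proof -
      have "\<bar>0 - p/2\<bar> = p/2" "\<bar>p - p/2\<bar> = p/2" using p01 by auto
      hence "comp_gini [0, p] (p/2) = 1" by (simp only: cg2) simp
      moreover have "p/2 \<in> {0..1}" using p01 by auto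
      ultimately show ?thesis using opt_ge[of 0 p "p/2"] p01 by auto
    qed
    have "6/5 \<le> OPT [0,p] / comp_gini [0,p] (f [0,p])"
      unfolding fp c using o p01 False mult_left_mono[OF o, of "2-p"] by (simp add: field_simps)
    then show ?thesis using ratio_le[OF pr] by simp
  qed
qed

end
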